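(* Let $u_1,u_2,u_3,u_4$ be Laurent polynomials with symmetry types $\mathrm{S}u_j(z)=\epsilon_jz^{c_j}$, $\epsilon_j\in\{\pm1\}$, $c_j\in\mathbb Z$, $j=1,2,3,4$, and suppose $\mathrm{S}u_1/\mathrm{S}u_2=\mathrm{S}u_3/\mathrm{S}u_4$. Define $$u_5(z):=u_1(z)u_3(z)+z^{c_1}u_2^\star(z)u_4(z),\qquad u_6(z):=u_2(z)u_3(z)+z^{c_1}u_1^\star(z)u_4(z).$$ Then $\mathrm{S}u_5(z)=\epsilon_1\epsilon_3z^{c_1+c_3}$, $\mathrm{S}u_6(z)=\epsilon_2\epsilon_3z^{c_2+c_3}$, $\mathrm{S}u_5/\mathrm{S}u_6=\mathrm{S}u_1/\mathrm{S}u_2=\mathrm{S}u_3/\mathrm{S}u_4$, and $$u_5u_5^\star-u_6u_6^\star=(u_1u_1^\star-u_2u_2^\star)(u_3u_3^\star-u_4u_4^\star).$$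
   Context: Laurent polynomial $u(z)=\sum_ku(k)z^k$ with finitely many nonzero complex coefficients; $u^\star(z):=\sum_k\overline{u(k)}z^{-k}$. $u$ has symmetry of type $\epsilon z^c$ if $u(z)=\epsilon z^cu(z^{-1})$; for nonzero $u$, $\mathrm{S}u(z):=u(z)/u(z^{-1})$; the zero polynomial has symmetry of every type. *)

theory Defs
  imports Complex_Main "HOL-Library.Poly_Mapping"
begin

text \<open>Laurent polynomials with complex coefficients: finitely supported maps
  int to complex; the product of poly_mapping is the convolution product, so
  single k a represents the monomial a z^k.\<close>

type_synonym laurent = "int \<Rightarrow>\<^sub>0 complex"

definition lrefl :: "laurent \<Rightarrow> laurent" where
  "lrefl u = (\<Sum>k\<in>Poly_Mapping.keys u. Poly_Mapping.single (- k) (Poly_Mapping.lookup u k))"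

definition lstar :: "laurent \<Rightarrow> laurent" where
  "lstar u = (\<Sum>k\<in>Poly_Mapping.keys u. Poly_Mapping.single (- k) (cnj (Poly_Mapping.lookup u k)))"

definition has_symmetry :: "laurent \<Rightarrow> complex \<Rightarrow> int \<Rightarrow> bool" where
  "has_symmetry u \<epsilon> c \<longleftrightarrow> u = Poly_Mapping.single c \<epsilon> * lrefl u"

end

theory Submission
  imports Defs
begin

definition rm :: "(complex \<Rightarrow> complex) \<Rightarrow> laurent \<Rightarrow> laurent" where
  "rm \<phi> u = (\<Sum>k\<in>Poly_Mapping.keys u. Poly_Mapping.single (- k) (\<phi> (Poly_Mapping.lookup u k)))"

lemma lrefl_rm: "lrefl = rm (\<lambda>x. x)"
  by (simp add: fun_eq_iff lrefl_def rm_def)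

lemma lstar_rm: "lstar = rm cnj"
  by (simp add: fun_eq_iff lstar_def rm_def)

lemma lookup_rm:
  assumes "\<phi> 0 = 0"
  shows "Poly_Mapping.lookup (rm \<phi> u) j = \<phi> (Poly_Mapping.lookup u (- j))"
proof -
  have "Poly_Mapping.lookup (rm \<phi> u) j
      = (\<Sum>k\<in>Poly_Mapping.keys u. (\<phi> (Poly_Mapping.lookup u k) when - k = j))"
    by (simp add: rm_def lookup_sum lookup_single)
  also have "\<dots> = \<phi> (Poly_Mapping.lookup u (- j))"
  proof (cases "- j \<in> Poly_Mapping.keys u")
    case True
    then show ?thesis
      by (subst sum.remove[OF finite_keys True]) (auto intro!: sum.neutral simp: when_def)
  next
    case False
    then show ?thesis using assms
      by (auto intro!: sum.neutral simp: when_def in_keys_iff)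
  qed
  finally show ?thesis .
qed

lemma decomp: "u = (\<Sum>k\<in>Poly_Mapping.keys u. Poly_Mapping.single k (Poly_Mapping.lookup u k))"
proof (rule poly_mapping_eqI)
  fix j
  show "Poly_Mapping.lookup u j = Poly_Mapping.lookup (\<Sum>k\<in>Poly_Mapping.keys u. Poly_Mapping.single k (Poly_Mapping.lookup u k)) j"
  proof (cases "j \<in> Poly_Mapping.keys u")
    case True
    then show ?thesis
      by (simp add: lookup_sum lookup_single, subst sum.remove[OF finite_keys True]) (auto intro!: sum.neutral simp: when_def)
  next
    case False
    then show ?thesis
      by (auto simp: lookup_sum lookup_single intro!: sum.neutral simp: when_def in_keys_iff)
  qed
qed

locale hm =
  fixes \<phi> :: "complex \<Rightarrow> complex"
  assumes z: "\<phi> 0 = 0" and ad: "\<And>a b. \<phi> (a + b) = \<phi> a + \<phi> b"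
    and mu: "\<And>a b. \<phi> (a * b) = \<phi> a * \<phi> b"
begin

lemma rm_add: "rm \<phi> (u + v) = rm \<phi> u + rm \<phi> v"
  by (rule poly_mapping_eqI) (simp add: lookup_rm z lookup_add ad)

lemma rm_zero: "rm \<phi> 0 = 0"
  by (simp add: rm_def)

lemma rm_sum: "rm \<phi> (sum f A) = (\<Sum>x\<in>A. rm \<phi> (f x))"
  by (induction A rule: infinite_finite_induct) (simp_all add: rm_zero rm_add)

lemma rm_single: "rm \<phi> (Poly_Mapping.single c a) = Poly_Mapping.single (- c) (\<phi> a)"
  by (rule poly_mapping_eqI) (simp add: lookup_rm z lookup_single when_def)

lemma rm_mult: "rm \<phi> (u * v) = rm \<phi> u * rm \<phi> v"
proof -
  let ?K = "Poly_Mapping.keys u" and ?L = "Poly_Mapping.keys v"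
  have "u * v = (\<Sum>k\<in>?K. Poly_Mapping.single k (Poly_Mapping.lookup u k))
     * (\<Sum>l\<in>?L. Poly_Mapping.single l (Poly_Mapping.lookup v l))"
    using decomp[of u] decomp[of v] by simp
  also have "\<dots> = (\<Sum>k\<in>?K. \<Sum>l\<in>?L. Poly_Mapping.single (k + l) (Poly_Mapping.lookup u k * Poly_Mapping.lookup v l))"
    by (simp add: sum_product mult_single)
  finally have uv: "u * v = \<dots>" .
  have "rm \<phi> u * rm \<phi> v = rm \<phi> (\<Sum>k\<in>?K. Poly_Mapping.single k (Poly_Mapping.lookup u k))
     * rm \<phi> (\<Sum>l\<in>?L. Poly_Mapping.single l (Poly_Mapping.lookup v l))"
    using decomp[of u] decomp[of v] by simp
  also have "\<dots> = (\<Sum>k\<in>?K. \<Sum>l\<in>?L. Poly_Mapping.single (- (k + l)) (\<phi> (Poly_Mapping.lookup u k * Poly_Mapping.lookup v l)))"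
    by (simp add: rm_sum rm_single sum_product mult_single mu)
  finally have r: "rm \<phi> u * rm \<phi> v = \<dots>" .
  show ?thesis unfolding uv r by (simp only: rm_sum rm_single)
qed

end

interpretation hid: hm "\<lambda>x. x" by unfold_locales auto
interpretation hcnj: hm cnj by unfold_locales auto

lemma lstar_lrefl: "lstar (lrefl u) = lrefl (lstar u)"
  by (rule poly_mapping_eqI) (simp add: lstar_rm lrefl_rm lookup_rm)

lemma lstar_unit: "Poly_Mapping.single c 1 * lstar (Poly_Mapping.single c 1) = (1::laurent)"
  by (simp add: lstar_rm hcnj.rm_single mult_single)

lemma lstar_lstar: "lstar (lstar u) = u"
  by (rule poly_mapping_eqI) (simp add: lstar_rm lookup_rm)

lemma cong4: "a = a' \<Longrightarrow> b = b' \<Longrightarrow> c = c' \<Longrightarrow> d = d' \<Longrightarrow> a*b + k*c*d = a'*b' + k*c'*(d'::laurent)"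
  by simp

lemma ident:
  fixes z w a1 a2 a3 a4 s1 s2 s3 s4 :: "'a::comm_ring_1"
  assumes "z * w = 1"
  shows "(a1*a3 + z*s2*a4)*(s1*s3 + w*a2*s4) - (a2*a3 + z*s1*a4)*(s2*s3 + w*a1*s4)
     = (a1*s1 - a2*s2)*(a3*s3 - a4*s4)"
proof -
  have "(a1*a3 + z*s2*a4)*(s1*s3 + w*a2*s4) - (a2*a3 + z*s1*a4)*(s2*s3 + w*a1*s4)
     = a1*s1*a3*s3 - a2*s2*a3*s3 + (z*w)*(a2*s2*a4*s4 - a1*s1*a4*s4)"
    by (simp add: algebra_simps)
  also have "\<dots> = (a1*s1 - a2*s2)*(a3*s3 - a4*s4)" using assms by (simp add: algebra_simps)
  finally show ?thesis .
qed

theorem lemma3p15: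
  fixes u1 u2 u3 u4 :: laurent and \<epsilon>1 \<epsilon>2 \<epsilon>3 \<epsilon>4 :: complex and c1 c2 c3 c4 :: int
  assumes nz: "u1 \<noteq> 0" "u2 \<noteq> 0" "u3 \<noteq> 0" "u4 \<noteq> 0"
    and eps: "\<epsilon>1 \<in> {1, -1}" "\<epsilon>2 \<in> {1, -1}" "\<epsilon>3 \<in> {1, -1}" "\<epsilon>4 \<in> {1, -1}"
    and sym: "has_symmetry u1 \<epsilon>1 c1" "has_symmetry u2 \<epsilon>2 c2"
             "has_symmetry u3 \<epsilon>3 c3" "has_symmetry u4 \<epsilon>4 c4"
    and ratio: "Poly_Mapping.single (c1 - c2) (\<epsilon>1 / \<epsilon>2)
              = Poly_Mapping.single (c3 - c4) (\<epsilon>3 / \<epsilon>4)"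
  defines "u5 \<equiv> u1 * u3 + Poly_Mapping.single c1 1 * lstar u2 * u4"
    and "u6 \<equiv> u2 * u3 + Poly_Mapping.single c1 1 * lstar u1 * u4"
  shows "has_symmetry u5 (\<epsilon>1 * \<epsilon>3) (c1 + c3)
       \<and> has_symmetry u6 (\<epsilon>2 * \<epsilon>3) (c2 + c3)
       \<and> (Poly_Mapping.single ((c1 + c3) - (c2 + c3)) ((\<epsilon>1 * \<epsilon>3) / (\<epsilon>2 * \<epsilon>3))
           = Poly_Mapping.single (c1 - c2) (\<epsilon>1 / \<epsilon>2)
         \<and> Poly_Mapping.single (c1 - c2) (\<epsilon>1 / \<epsilon>2)
           = Poly_Mapping.single (c3 - c4) (\<epsilon>3 / \<epsilon>4))
       \<and> u5 * lstar u5 - u6 * lstar u6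
           = (u1 * lstar u1 - u2 * lstar u2) * (u3 * lstar u3 - u4 * lstar u4)"
proof -
  have l1: "\<epsilon>1 / \<epsilon>2 = (\<epsilon>3 / \<epsilon>4 when c3 - c4 = c1 - c2)"
  proof -
    have "Poly_Mapping.lookup (Poly_Mapping.single (c1 - c2) (\<epsilon>1 / \<epsilon>2)) (c1 - c2)
      = Poly_Mapping.lookup (Poly_Mapping.single (c3 - c4) (\<epsilon>3 / \<epsilon>4)) (c1 - c2)"
      using ratio by simp
    then show ?thesis by (simp add: lookup_single)
  qed
  have nz12: "\<epsilon>1 / \<epsilon>2 \<noteq> 0" using eps by auto
  have cc: "c3 - c4 = c1 - c2" using l1 nz12 by (auto simp: when_def split: if_splits)
  have ee: "\<epsilon>1 / \<epsilon>2 = \<epsilon>3 / \<epsilon>4" using l1 cc by simp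
  have e24: "\<epsilon>2 * \<epsilon>4 = \<epsilon>1 * \<epsilon>3" using eps ee by auto
  have e14: "\<epsilon>1 * \<epsilon>4 = \<epsilon>2 * \<epsilon>3" using eps ee by auto
  have cnjE: "cnj \<epsilon>1 = \<epsilon>1" "cnj \<epsilon>2 = \<epsilon>2" using eps by auto
  note s = sym[unfolded has_symmetry_def]
  have st2: "lstar u2 = Poly_Mapping.single (- c2) \<epsilon>2 * lrefl (lstar u2)"
    by (subst s(2)) (simp add: lstar_rm[symmetric] lrefl_rm[symmetric] hcnj.rm_mult[folded lstar_rm] hcnj.rm_single[folded lstar_rm] lstar_lrefl cnjE)
  have st1: "lstar u1 = Poly_Mapping.single (- c1) \<epsilon>1 * lrefl (lstar u1)"
    by (subst s(1)) (simp add: lstar_rm[symmetric] lrefl_rm[symmetric] hcnj.rm_mult[folded lstar_rm] hcnj.rm_single[folded lstar_rm] lstar_lrefl cnjE)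
  note rl = hid.rm_add[folded lrefl_rm] hid.rm_mult[folded lrefl_rm] hid.rm_single[folded lrefl_rm]
  note rs = hcnj.rm_add[folded lstar_rm] hcnj.rm_mult[folded lstar_rm] hcnj.rm_single[folded lstar_rm]
  have sym5: "has_symmetry u5 (\<epsilon>1 * \<epsilon>3) (c1 + c3)"
  proof -
    let ?A = "lrefl u1" and ?B = "lrefl u3" and ?C = "lrefl (lstar u2)" and ?D = "lrefl u4"
    have R: "lrefl u5 = ?A * ?B + Poly_Mapping.single (- c1) 1 * ?C * ?D"
      unfolding u5_def by (simp add: rl)
    have L: "u5 = (Poly_Mapping.single c1 \<epsilon>1 * ?A) * (Poly_Mapping.single c3 \<epsilon>3 * ?B)
       + Poly_Mapping.single c1 1 * (Poly_Mapping.single (- c2) \<epsilon>2 * ?C) * (Poly_Mapping.single c4 \<epsilon>4 * ?D)"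
      unfolding u5_def by (rule cong4[OF s(1) s(3) st2 s(4)])
    have k1: "Poly_Mapping.single c1 \<epsilon>1 * Poly_Mapping.single c3 \<epsilon>3 = Poly_Mapping.single (c1 + c3) (\<epsilon>1 * \<epsilon>3)"
      by (simp add: mult_single)
    have k2: "Poly_Mapping.single c1 1 * Poly_Mapping.single (- c2) \<epsilon>2 * Poly_Mapping.single c4 \<epsilon>4
       = Poly_Mapping.single (c1 + c3) (\<epsilon>1 * \<epsilon>3) * Poly_Mapping.single (- c1) (1::complex)"
    proof -
      have "c1 - c2 + c4 = c3" using cc by simp
      then show ?thesis using e24 by (simp add: mult_single)
    qed
    have "u5 = (Poly_Mapping.single c1 \<epsilon>1 * Poly_Mapping.single c3 \<epsilon>3) * (?A * ?B)
       + (Poly_Mapping.single c1 1 * Poly_Mapping.single (- c2) \<epsilon>2 * Poly_Mapping.single c4 \<epsilon>4) * (?C * ?D)"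
      unfolding L by (simp only: ac_simps)
    also have "\<dots> = Poly_Mapping.single (c1 + c3) (\<epsilon>1 * \<epsilon>3) * lrefl u5"
      unfolding k1 k2 R by (simp add: algebra_simps)
    finally show ?thesis unfolding has_symmetry_def .
  qed
  have sym6: "has_symmetry u6 (\<epsilon>2 * \<epsilon>3) (c2 + c3)"
  proof -
    let ?A = "lrefl u2" and ?B = "lrefl u3" and ?C = "lrefl (lstar u1)" and ?D = "lrefl u4"
    have R: "lrefl u6 = ?A * ?B + Poly_Mapping.single (- c1) 1 * ?C * ?D"
      unfolding u6_def by (simp add: rl)
    have L: "u6 = (Poly_Mapping.single c2 \<epsilon>2 * ?A) * (Poly_Mapping.single c3 \<epsilon>3 * ?B)
       + Poly_Mapping.single c1 1 * (Poly_Mapping.single (- c1) \<epsilon>1 * ?C) * (Poly_Mapping.single c4 \<epsilon>4 * ?D)"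
      unfolding u6_def by (rule cong4[OF s(2) s(3) st1 s(4)])
    have k1: "Poly_Mapping.single c2 \<epsilon>2 * Poly_Mapping.single c3 \<epsilon>3 = Poly_Mapping.single (c2 + c3) (\<epsilon>2 * \<epsilon>3)"
      by (simp add: mult_single)
    have k2: "Poly_Mapping.single c1 1 * Poly_Mapping.single (- c1) \<epsilon>1 * Poly_Mapping.single c4 \<epsilon>4
       = Poly_Mapping.single (c2 + c3) (\<epsilon>2 * \<epsilon>3) * Poly_Mapping.single (- c1) (1::complex)"
    proof -
      have "c4 = c2 + c3 - c1" using cc by simp
      then show ?thesis using e14 by (simp add: mult_single)
    qed
    have "u6 = (Poly_Mapping.single c2 \<epsilon>2 * Poly_Mapping.single c3 \<epsilon>3) * (?A * ?B)
       + (Poly_Mapping.single c1 1 * Poly_Mapping.single (- c1) \<epsilon>1 * Poly_Mapping.single c4 \<epsilon>4) * (?C * ?D)"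
      unfolding L by (simp only: ac_simps)
    also have "\<dots> = Poly_Mapping.single (c2 + c3) (\<epsilon>2 * \<epsilon>3) * lrefl u6"
      unfolding k1 k2 R by (simp add: algebra_simps)
    finally show ?thesis unfolding has_symmetry_def .
  qed
  have e3: "\<epsilon>3 \<noteq> 0" using eps by auto
  have rat: "Poly_Mapping.single ((c1 + c3) - (c2 + c3)) ((\<epsilon>1 * \<epsilon>3) / (\<epsilon>2 * \<epsilon>3))
           = Poly_Mapping.single (c1 - c2) (\<epsilon>1 / \<epsilon>2)" using e3 by simp
  have zw: "Poly_Mapping.single c1 1 * Poly_Mapping.single (- c1) 1 = (1::laurent)"
    by (simp add: mult_single)
  have S5: "lstar u5 = lstar u1 * lstar u3 + Poly_Mapping.single (- c1) 1 * u2 * lstar u4"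
    unfolding u5_def by (simp add: rs lstar_lstar)
  have S6: "lstar u6 = lstar u2 * lstar u3 + Poly_Mapping.single (- c1) 1 * u1 * lstar u4"
    unfolding u6_def by (simp add: rs lstar_lstar)
  have id: "u5 * lstar u5 - u6 * lstar u6
           = (u1 * lstar u1 - u2 * lstar u2) * (u3 * lstar u3 - u4 * lstar u4)"
    unfolding S5 S6 unfolding u5_def u6_def by (rule ident[OF zw])
  show ?thesis using sym5 sym6 rat ratio id by blast
qed

end
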